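(* Let $X$ be a bounded random vector in $\mathbb R^N$ with $\mathbb E(X)=0$ and $Y$ a bounded real random variable, $m=\mathrm{Law}(X)$, with conditional cdf $F(x,y)=\mathbb P(Y\le y\mid X=x)$ and conditional quantile $Q(x,t)=\inf\{\alpha:F(x,\alpha)>t\}$, and assume that for $m$-a.e. $x$, $t\mapsto Q(x,t)$ is continuous and increasing, and that $\mathbb P(Y=\alpha+\beta\cdot X)=0$ for all $(\alpha,\beta)\in\mathbb R^{1+N}$. Let $\alpha\in C([0,1],\mathbb R)$, $\beta\in C([0,1],\mathbb R^N)$ be such that for $m$-a.e. $x$, $t\mapsto\alpha(t)+\beta(t)\cdot x$ is increasing on $[0,1]$. Then $Q(x,t)=\alpha(t)+x\cdot\beta(t)$ for $m$-a.e. $x$ and every $t\in[0,1]$ if and only if there exists a random variable $U$ such that $Y=\alpha(U)+X\cdot\beta(U)$ a.s., $U$ is uniformly distributed on $[0,1]$, and $U$ is independent of $X$.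
   Context: The underlying probability space is nonatomic. *)

theory Defs
  imports "HOL-Probability.Probability"
begin

definition nonatomic :: "'a measure \<Rightarrow> bool" where
  "nonatomic M \<longleftrightarrow> (\<forall>A\<in>sets M. 0 < measure M A \<longrightarrow>
      (\<exists>B\<in>sets M. B \<subseteq> A \<and> 0 < measure M B \<and> measure M B < measure M A))"

definition is_cond_cdf ::
  "'a measure \<Rightarrow> ('a \<Rightarrow> 'b::euclidean_space) \<Rightarrow> ('a \<Rightarrow> real) \<Rightarrow> ('b \<Rightarrow> real \<Rightarrow> real) \<Rightarrow> bool" where
  "is_cond_cdf M X Y F \<longleftrightarrow>
     (\<forall>x. mono (F x) \<and> (\<forall>y. continuous (at_right y) (F x)) \<and>
          (F x \<longlongrightarrow> 0) at_bot \<and> (F x \<longlongrightarrow> 1) at_top) \<and>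
     (\<forall>y. (\<lambda>x. F x y) \<in> borel_measurable borel) \<and>
     (\<forall>A\<in>sets borel. \<forall>y.
        measure M {\<omega>\<in>space M. X \<omega> \<in> A \<and> Y \<omega> \<le> y} =
        (LINT x:A|distr M borel X. F x y))"

text \<open>Conditional quantile Q(x,t) = inf {a. F(x,a) > t} for t < 1; at t = 1 we use the
  finite (left-continuous) extension inf {a. F(x,a) \<ge> 1}.\<close>
definition cond_quantile :: "('b \<Rightarrow> real \<Rightarrow> real) \<Rightarrow> 'b \<Rightarrow> real \<Rightarrow> real" where
  "cond_quantile F x t =
     (if t < 1 then Inf {a. F x a > t} else Inf {a. F x a \<ge> 1})"

definition indep_rv :: "'a measure \<Rightarrow> ('a \<Rightarrow> 'c::topological_space) \<Rightarrow> ('a \<Rightarrow> 'd::topological_space) \<Rightarrow> bool" where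
  "indep_rv M U V \<longleftrightarrow> (\<forall>A\<in>sets borel. \<forall>B\<in>sets borel.
      measure M {\<omega>\<in>space M. U \<omega> \<in> A \<and> V \<omega> \<in> B} =
      measure M {\<omega>\<in>space M. U \<omega> \<in> A} * measure M {\<omega>\<in>space M. V \<omega> \<in> B})"

end

theory Submission
  imports Defs
begin


definition cdfish :: "(real \<Rightarrow> real) \<Rightarrow> bool" where
  "cdfish f \<longleftrightarrow> mono f \<and> (\<forall>y. continuous (at_right y) f) \<and> (f \<longlongrightarrow> 0) at_bot \<and> (f \<longlongrightarrow> 1) at_top"

lemma cdfish_ge0: "cdfish f \<Longrightarrow> 0 \<le> f y"
proof -
  assume c: "cdfish f"
  hence m: "mono f" and l: "(f \<longlongrightarrow> 0) at_bot" by (auto simp: cdfish_def)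
  have "eventually (\<lambda>z. f z \<le> f y) at_bot"
    by (rule eventually_at_bot_linorderI[of y]) (use m in \<open>simp add: mono_def\<close>)
  from tendsto_upperbound[OF l this] show ?thesis by simp
qed

lemma cdfish_le1: "cdfish f \<Longrightarrow> f y \<le> 1"
proof -
  assume c: "cdfish f"
  hence m: "mono f" and l: "(f \<longlongrightarrow> 1) at_top" by (auto simp: cdfish_def)
  have "eventually (\<lambda>z. f y \<le> f z) at_top"
    by (rule eventually_at_top_linorderI[of y]) (use m in \<open>simp add: mono_def\<close>)
  from tendsto_lowerbound[OF l this] show ?thesis by simp
qed

lemma cdfish_bdd: "cdfish f \<Longrightarrow> 0 < t \<Longrightarrow> bdd_below {a. t < f a}"
proof -
  assume c: "cdfish f" and t: "0 < t"
  hence l: "(f \<longlongrightarrow> 0) at_bot" by (auto simp: cdfish_def)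
  have "eventually (\<lambda>z. f z < t) at_bot" using order_tendstoD(2)[OF l t] .
  then obtain b where b: "\<And>z. z \<le> b \<Longrightarrow> f z < t" unfolding eventually_at_bot_linorder by auto
  show ?thesis unfolding bdd_below_def
    by (rule exI[of _ b]) (metis (mono_tags) b linorder_not_le mem_Collect_eq order_less_asym)
qed

lemma cdfish_bdd1: "cdfish f \<Longrightarrow> bdd_below {a. 1 \<le> f a}"
proof -
  assume c: "cdfish f"
  hence l: "(f \<longlongrightarrow> 0) at_bot" by (auto simp: cdfish_def)
  have "eventually (\<lambda>z. f z < 1) at_bot" using order_tendstoD(2)[OF l] by simp
  then obtain b where b: "\<And>z. z \<le> b \<Longrightarrow> f z < 1" unfolding eventually_at_bot_linorder by auto
  have "b \<le> a" if "1 \<le> f a" for a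
  proof (rule ccontr)
    assume "\<not> b \<le> a" hence "a \<le> b" by simp
    from b[OF this] that show False by simp
  qed
  thus ?thesis unfolding bdd_below_def by auto
qed

lemma cdfish_ne: "cdfish f \<Longrightarrow> t < 1 \<Longrightarrow> {a. t < f a} \<noteq> {}"
proof -
  assume c: "cdfish f" and t: "t < 1"
  hence l: "(f \<longlongrightarrow> 1) at_top" by (auto simp: cdfish_def)
  have "eventually (\<lambda>z. t < f z) at_top" using order_tendstoD(1)[OF l t] .
  then obtain b where b: "\<And>z. z \<ge> b \<Longrightarrow> t < f z" unfolding eventually_at_top_linorder by auto
  thus ?thesis by auto
qed

lemma cdfish_mono: "cdfish f \<Longrightarrow> a \<le> b \<Longrightarrow> f a \<le> f b"
  by (auto simp: cdfish_def mono_def)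

lemma cdfish_rc: "cdfish f \<Longrightarrow> f y < c \<Longrightarrow> \<exists>d>0. f (y + d) < c"
proof -
  assume c: "cdfish f" and lt: "f y < c"
  hence "continuous (at_right y) f" by (auto simp: cdfish_def)
  with continuous_at_right_real_increasing[of f y] c
  have "\<forall>e>0. \<exists>d>0. f (y + d) - f y < e" by (auto simp: cdfish_def mono_def)
  from this[rule_format, of "c - f y"] lt
  obtain d where "d > 0" "f (y + d) - f y < c - f y" by auto
  thus ?thesis by auto
qed

lemma Q_lower:
  assumes c: "cdfish (F x)" and t: "0 < t" "t < 1"
  shows "t \<le> F x (cond_quantile F x t)"
proof (rule ccontr)
  let ?S = "{a. t < F x a}"
  let ?q = "cond_quantile F x t"
  have q: "?q = Inf ?S" using t by (simp add: cond_quantile_def)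
  assume "\<not> t \<le> F x ?q"
  hence "F x ?q < t" by simp
  then obtain d where d: "d > 0" "F x (?q + d) < t" using cdfish_rc[OF c] by blast
  have "Inf ?S < ?q + d" using q d by simp
  then obtain a where a: "a \<in> ?S" "a < ?q + d"
    using cInf_less_iff[OF cdfish_ne[OF c t(2)] cdfish_bdd[OF c t(1)]] by blast
  have "F x a \<le> F x (?q + d)" using cdfish_mono[OF c] a by simp
  thus False using a d by simp
qed

lemma Q_upper:
  assumes c: "cdfish (F x)" and sm: "strict_mono_on {0..1} (cond_quantile F x)"
    and t: "0 \<le> t" "t < 1"
  shows "F x (cond_quantile F x t) \<le> t"
proof (rule ccontr)
  let ?q = "cond_quantile F x t"
  assume "\<not> F x ?q \<le> t"
  hence gt: "t < F x ?q" by simp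
  define t' where "t' = (t + min (F x ?q) 1) / 2"
  have t': "t < t'" "t' < 1" "t' < F x ?q" "0 < t'" using gt t unfolding t'_def by auto
  have "cond_quantile F x t' = Inf {a. t' < F x a}" using t' by (simp add: cond_quantile_def)
  also have "\<dots> \<le> ?q" by (rule cInf_lower) (use t' cdfish_bdd[OF c] in auto)
  finally have "cond_quantile F x t' \<le> ?q" .
  moreover have "?q < cond_quantile F x t'"
    using strict_mono_onD[OF sm, of t t'] t t' by auto
  ultimately show False by simp
qed

lemma Q_at:
  assumes c: "cdfish (F x)" and sm: "strict_mono_on {0..1} (cond_quantile F x)"
    and t: "0 \<le> t" "t \<le> 1"
  shows "F x (cond_quantile F x t) = t"
proof (cases "t < 1")
  case True
  show ?thesis
  proof (cases "t = 0")
    case True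
    have "F x (cond_quantile F x t) \<le> t" using Q_upper[where F=F and x=x, OF c sm, of t] True t by simp
    moreover have "0 \<le> F x (cond_quantile F x t)" using cdfish_ge0[OF c] .
    ultimately show ?thesis using True by simp
  next
    case False
    hence "0 < t" using t by simp
    thus ?thesis using Q_upper[where F=F and x=x, OF c sm, of t] Q_lower[where F=F and x=x, OF c, of t] t True by simp
  qed
next
  case False
  hence t1: "t = 1" using t by simp
  have "s \<le> F x (cond_quantile F x 1)" if s: "0 < s" "s < 1" for s
  proof -
    have "s \<le> F x (cond_quantile F x s)" using Q_lower[where F=F and x=x, OF c s] .
    also have "\<dots> \<le> F x (cond_quantile F x 1)"
      using cdfish_mono[OF c] strict_mono_on_leD[OF sm, of s 1] s by auto
    finally show ?thesis .
  qed
  hence "1 \<le> F x (cond_quantile F x 1)"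
    by (metis dense_le_bounded zero_less_one)
  thus ?thesis using cdfish_le1[OF c] t1 by (simp add: order_antisym)
qed



lemma Q_inv:
  assumes c: "cdfish (F x)" and co: "continuous_on {0..1} (cond_quantile F x)"
    and y: "cond_quantile F x 0 \<le> y" "y \<le> cond_quantile F x 1"
  shows "cond_quantile F x (F x y) = y"
proof -
  let ?Q = "cond_quantile F x"
  let ?u = "F x y"
  have u: "0 \<le> ?u" "?u \<le> 1" using cdfish_ge0[OF c] cdfish_le1[OF c] by auto
  have le1: "y \<le> ?Q ?u"
  proof (cases "?u < 1")
    case True
    have "?Q ?u = Inf {a. ?u < F x a}" using True by (simp add: cond_quantile_def)
    also have "y \<le> \<dots>"
    proof (rule cInf_greatest)
      show "{a. ?u < F x a} \<noteq> {}" using cdfish_ne[OF c True] .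
      fix a assume "a \<in> {a. ?u < F x a}"
      hence "?u < F x a" by simp
      thus "y \<le> a" using cdfish_mono[OF c, of a y] by (cases "a \<le> y") auto
    qed
    finally show ?thesis .
  next
    case False
    hence "?u = 1" using u by simp
    thus ?thesis using y by simp
  qed
  have le2: "?Q ?u \<le> y"
  proof (cases "?u = 0")
    case True thus ?thesis using y by simp
  next
    case False
    hence u0: "0 < ?u" using u by simp
    have lt: "?Q t \<le> y" if t: "0 < t" "t < ?u" for t
    proof -
      have "?Q t = Inf {a. t < F x a}" using t u by (simp add: cond_quantile_def)
      also have "\<dots> \<le> y" by (rule cInf_lower) (use t cdfish_bdd[OF c] in auto)
      finally show ?thesis .
    qed
    show ?thesis
    proof (rule ccontr)
      assume "\<not> ?Q ?u \<le> y"
      hence e: "0 < ?Q ?u - y" by simp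
      from co[unfolded continuous_on_iff, rule_format, of ?u "?Q ?u - y"] e u
      obtain d where d: "d > 0" "\<And>t. t \<in> {0..1} \<Longrightarrow> dist t ?u < d \<Longrightarrow> dist (?Q t) (?Q ?u) < ?Q ?u - y"
        by auto
      define t where "t = max (?u / 2) (?u - d / 2)"
      have t: "0 < t" "t < ?u" "t \<in> {0..1}" "dist t ?u < d" using u0 d u unfolding t_def dist_real_def by auto
      have "dist (?Q t) (?Q ?u) < ?Q ?u - y" using d(2)[OF t(3,4)] .
      with lt[OF t(1,2)] show False by (simp add: dist_real_def)
    qed
  qed
  show ?thesis using le1 le2 by simp
qed

lemma Q_from_F:
  fixes g :: "real \<Rightarrow> real"
  assumes c: "cdfish (F x)" and gc: "continuous_on {0..1} g" and gm: "strict_mono_on {0..1} g"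
    and fg: "\<And>s. s \<in> {0..1} \<Longrightarrow> F x (g s) = s"
    and t: "t \<in> {0..1}"
  shows "cond_quantile F x t = g t"
proof (cases "t < 1")
  case True
  let ?S = "{a. t < F x a}"
  have q: "cond_quantile F x t = Inf ?S" using True by (simp add: cond_quantile_def)
  have "Inf ?S = g t"
  proof (rule cInf_eq_non_empty)
    show "?S \<noteq> {}" using cdfish_ne[OF c True] .
    fix a assume "a \<in> ?S"
    hence "t < F x a" by simp
    thus "g t \<le> a" using cdfish_mono[OF c, of a "g t"] fg[OF t] by (cases "a \<le> g t") auto
  next
    fix y assume lb0: "\<And>a. a \<in> ?S \<Longrightarrow> y \<le> a"
    hence lb: "\<forall>a\<in>?S. y \<le> a" by blast
    show "y \<le> g t"
    proof (rule ccontr)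
      assume "\<not> y \<le> g t" hence gy: "g t < y" by simp
      show False
      proof (cases "g 1 < y")
        case True
        have "g 1 \<in> ?S" using fg[of 1] \<open>t < 1\<close> by simp
        with lb True show False by auto
      next
        case False
        have "g t \<le> (g t + y) / 2" "(g t + y)/2 \<le> g 1" using gy False by auto
        have "continuous_on {t..1} g" using gc t by (auto intro: continuous_on_subset)
        from IVT'[of g t "(g t + y)/2" 1, OF _ _ _ this] gy False t
        obtain s where s: "t \<le> s" "s \<le> 1" "g s = (g t + y) / 2"
          by auto
        have "s \<noteq> t" using s gy by auto
        hence "t < s" using s by simp
        moreover have "F x (g s) = s" using fg[of s] s(1,2) t by simp
        ultimately have "g s \<in> ?S" by simp
        have "y \<le> g s" using lb0[OF \<open>g s \<in> ?S\<close>] .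
        hence "y \<le> (g t + y) / 2" using s(3) by simp
        thus False using gy by simp
      qed
    qed
  qed
  thus ?thesis using q by simp
next
  case False
  hence t1: "t = 1" using t by simp
  let ?S = "{a. 1 \<le> F x a}"
  have q: "cond_quantile F x t = Inf ?S" using t1 by (simp add: cond_quantile_def)
  have "Inf ?S = g 1"
  proof (rule cInf_eq_minimum)
    show "g 1 \<in> ?S" using fg[of 1] by simp
    fix a assume "a \<in> ?S"
    hence a1: "1 \<le> F x a" by simp
    show "g 1 \<le> a"
    proof (rule ccontr)
      assume "\<not> g 1 \<le> a" hence lt: "a < g 1" by simp
      show False
      proof (cases "a < g 0")
        case True
        have "F x a \<le> F x (g 0)" using cdfish_mono[OF c] True by simp
        with fg[of 0] a1 show False by simp
      next
        case False
        from IVT'[of g 0 a 1] False lt gc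
        obtain s where s: "0 \<le> s" "s \<le> 1" "g s = a" by auto
        have "s \<noteq> 1" using s lt by auto
        with fg[of s] s a1 show False by simp
      qed
    qed
  qed
  thus ?thesis using q t1 by simp
qed



lemma cdfish_of_cdf: "is_cond_cdf M X Y F \<Longrightarrow> cdfish (F x)"
  by (simp add: is_cond_cdf_def cdfish_def)

lemma cdf_meas: "is_cond_cdf M X Y F \<Longrightarrow> (\<lambda>x. F x y) \<in> borel_measurable borel"
  by (simp add: is_cond_cdf_def)

lemma cdf_eq: "is_cond_cdf M X Y F \<Longrightarrow> A \<in> sets borel \<Longrightarrow>
   measure M {\<omega>\<in>space M. X \<omega> \<in> A \<and> Y \<omega> \<le> y} = (LINT x:A|distr M borel X. F x y)"
  by (simp add: is_cond_cdf_def)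

lemma joint_meas:
  fixes F :: "'b::euclidean_space \<Rightarrow> real \<Rightarrow> real"
  assumes c: "\<And>x. cdfish (F x)" and m: "\<And>y. (\<lambda>x. F x y) \<in> borel_measurable borel"
  shows "(\<lambda>p. F (fst p) (snd p)) \<in> borel_measurable (borel :: ('b \<times> real) measure)"
proof -
  have "(\<lambda>p. F (fst p) (snd p)) \<in> borel_measurable (borel \<Otimes>\<^sub>M borel)"
  proof (subst borel_measurable_iff_less, intro allI)
    fix s
    have eq: "{w \<in> space (borel \<Otimes>\<^sub>M borel). F (fst w) (snd w) < s} =
      (\<Union>q\<in>\<rat>. {w \<in> space (borel \<Otimes>\<^sub>M (borel::real measure)). snd w < q \<and> F (fst w) q < s})"
    proof (intro equalityI subsetI)
      fix w assume "w \<in> {w \<in> space (borel \<Otimes>\<^sub>M borel). F (fst w) (snd w) < s}"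
      hence lt: "F (fst w) (snd w) < s" and sp: "w \<in> space (borel \<Otimes>\<^sub>M borel)" by auto
      obtain d where d: "d > 0" "F (fst w) (snd w + d) < s" using cdfish_rc[OF c lt] by blast
      obtain q where q: "q \<in> \<rat>" "snd w < q" "q < snd w + d" using Rats_dense_in_real[of "snd w" "snd w + d"] d by auto
      have "F (fst w) q \<le> F (fst w) (snd w + d)" using cdfish_mono[OF c] q by simp
      thus "w \<in> (\<Union>q\<in>\<rat>. {w \<in> space (borel \<Otimes>\<^sub>M borel). snd w < q \<and> F (fst w) q < s})"
        using q d sp by auto
    next
      fix w assume "w \<in> (\<Union>q\<in>\<rat>. {w \<in> space (borel \<Otimes>\<^sub>M (borel::real measure)). snd w < q \<and> F (fst w) q < s})"
      then obtain q where q: "snd w < q" "F (fst w) q < s" and sp: "w \<in> space (borel \<Otimes>\<^sub>M borel)" by auto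
      have "F (fst w) (snd w) \<le> F (fst w) q" using cdfish_mono[OF c] q by simp
      thus "w \<in> {w \<in> space (borel \<Otimes>\<^sub>M borel). F (fst w) (snd w) < s}" using q sp by auto
    qed
    have "(\<Union>q\<in>\<rat>. {w \<in> space (borel \<Otimes>\<^sub>M (borel::real measure)). snd w < q \<and> F (fst w) q < s}) \<in> sets (borel \<Otimes>\<^sub>M borel)"
    proof (rule sets.countable_UN'')
      show "countable (\<rat> :: real set)" by (rule countable_rat)
      fix q :: real
      have [measurable]: "(\<lambda>x. F x q) \<in> borel_measurable borel" using m .
      show "{w \<in> space (borel \<Otimes>\<^sub>M (borel::real measure)). snd w < q \<and> F (fst w) q < s} \<in> sets (borel \<Otimes>\<^sub>M borel)"
        by measurable
    qed
    thus "{w \<in> space (borel \<Otimes>\<^sub>M borel). F (fst w) (snd w) < s} \<in> sets (borel \<Otimes>\<^sub>M borel)"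
      using eq by simp
  qed
  thus ?thesis by (simp add: borel_prod)
qed



context
  fixes M :: "'a measure" and X :: "'a \<Rightarrow> 'b::euclidean_space" and Y :: "'a \<Rightarrow> real"
    and F :: "'b \<Rightarrow> real \<Rightarrow> real"
  assumes P: "prob_space M" and Xm[measurable]: "X \<in> borel_measurable M"
    and Ym[measurable]: "Y \<in> borel_measurable M" and cdf: "is_cond_cdf M X Y F"
begin

interpretation prob_space M by (rule P)

abbreviation "mX \<equiv> distr M borel X"

lemma mX_prob: "prob_space mX" by (rule prob_space_distr) simp

interpretation mX: prob_space mX by (rule mX_prob)

lemma Fc: "cdfish (F x)" using cdfish_of_cdf[OF cdf] .

lemma F01: "0 \<le> F x y" "F x y \<le> 1" using cdfish_ge0[OF Fc] cdfish_le1[OF Fc] by auto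

lemma Fm_comp[measurable]:
  assumes [measurable]: "f \<in> borel_measurable N" "g \<in> borel_measurable N"
  shows "(\<lambda>z. F (f z) (g z)) \<in> borel_measurable N"
proof -
  have j: "(\<lambda>p. F (fst p) (snd p)) \<in> borel_measurable (borel :: ('b \<times> real) measure)"
    by (rule joint_meas[OF Fc cdf_meas[OF cdf]])
  have "(\<lambda>z. (f z, g z)) \<in> N \<rightarrow>\<^sub>M (borel :: ('b \<times> real) measure)"
    unfolding borel_prod[symmetric] by measurable
  from measurable_compose[OF this j] show ?thesis by simp
qed

lemma conv:
  assumes [measurable]: "g \<in> borel_measurable borel" "B \<in> sets borel"
    and g: "\<And>x. 0 \<le> g x" "\<And>x. g x \<le> 1"
  shows "(\<integral>\<^sup>+x. indicator B x * ennreal (g x) \<partial>mX) = ennreal (LINT x:B|mX. g x)"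
proof -
  have int: "integrable mX (\<lambda>x. indicator B x *\<^sub>R g x)"
    by (rule mX.integrable_const_bound[where B=1]) (auto simp: g indicator_def abs_le_iff intro: order_trans[OF _ g(2)] order_trans[OF g(1)])
  have "(\<integral>\<^sup>+x. indicator B x * ennreal (g x) \<partial>mX) = (\<integral>\<^sup>+x. ennreal (indicator B x *\<^sub>R g x) \<partial>mX)"
    by (intro nn_integral_cong) (auto simp: indicator_def)
  also have "\<dots> = ennreal (integral\<^sup>L mX (\<lambda>x. indicator B x *\<^sub>R g x))"
    by (rule nn_integral_eq_integral[OF int]) (auto simp: g indicator_def)
  finally show ?thesis by (simp add: set_lebesgue_integral_def)
qed

lemma L1_countable:
  assumes hm[measurable]: "h \<in> borel_measurable borel" and A[measurable]: "A \<in> sets borel"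
    and S: "countable S" and hS: "\<And>x. h x \<in> S"
  shows "measure M {\<omega>\<in>space M. X \<omega> \<in> A \<and> Y \<omega> \<le> h (X \<omega>)} = (LINT x:A|mX. F x (h x))"
proof -
  define E where "E c = {\<omega>\<in>space M. X \<omega> \<in> A \<inter> h -` {c} \<and> Y \<omega> \<le> c}" for c
  have hc[measurable]: "h -` {c} \<in> sets borel" for c
    using measurable_sets_borel[OF hm, of "{c}"] by simp
  have Ec[measurable]: "E c \<in> sets M" for c unfolding E_def by measurable
  have un: "{\<omega>\<in>space M. X \<omega> \<in> A \<and> Y \<omega> \<le> h (X \<omega>)} = (\<Union>c\<in>S. E c)"
    unfolding E_def using hS by auto
  have disj: "disjoint_family_on E S" unfolding disjoint_family_on_def E_def by auto
  have "emeasure M {\<omega>\<in>space M. X \<omega> \<in> A \<and> Y \<omega> \<le> h (X \<omega>)} = (\<integral>\<^sup>+c. emeasure M (E c) \<partial>count_space S)"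
    unfolding un by (rule emeasure_UN_countable[OF Ec S disj])
  also have "\<dots> = (\<integral>\<^sup>+c. \<integral>\<^sup>+x. indicator (A \<inter> h -` {c}) x * ennreal (F x c) \<partial>mX \<partial>count_space S)"
  proof (intro nn_integral_cong)
    fix c
    have "emeasure M (E c) = ennreal (measure M (E c))" by (simp add: emeasure_eq_measure)
    also have "measure M (E c) = (LINT x:A \<inter> h -` {c}|mX. F x c)"
      unfolding E_def by (rule cdf_eq[OF cdf]) measurable
    also have "ennreal \<dots> = (\<integral>\<^sup>+x. indicator (A \<inter> h -` {c}) x * ennreal (F x c) \<partial>mX)"
      by (rule conv[symmetric]) (auto simp: F01 cdf_meas[OF cdf])
    finally show "emeasure M (E c) = (\<integral>\<^sup>+x. indicator (A \<inter> h -` {c}) x * ennreal (F x c) \<partial>mX)" .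
  qed
  also have "\<dots> = (\<integral>\<^sup>+x. \<integral>\<^sup>+c. indicator (A \<inter> h -` {c}) x * ennreal (F x c) \<partial>count_space S \<partial>mX)"
    apply (rule nn_integral_count_space_nn_integral[symmetric, OF S])
    apply (subst measurable_cong_sets[OF sets_distr refl])
    by measurable
  also have "\<dots> = (\<integral>\<^sup>+x. indicator A x * ennreal (F x (h x)) \<partial>mX)"
  proof (intro nn_integral_cong)
    fix x
    have "(\<integral>\<^sup>+c. indicator (A \<inter> h -` {c}) x * ennreal (F x c) \<partial>count_space S)
        = (\<Sum>c\<in>{h x}. indicator (A \<inter> h -` {c}) x * ennreal (F x c))"
      by (rule nn_integral_count_space') (auto simp: hS indicator_def)
    thus "(\<integral>\<^sup>+c. indicator (A \<inter> h -` {c}) x * ennreal (F x c) \<partial>count_space S) = indicator A x * ennreal (F x (h x))"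
      by (simp add: indicator_def)
  qed
  also have "\<dots> = ennreal (LINT x:A|mX. F x (h x))"
    by (rule conv) (auto simp: F01)
  finally have "emeasure M {\<omega>\<in>space M. X \<omega> \<in> A \<and> Y \<omega> \<le> h (X \<omega>)} = ennreal (LINT x:A|mX. F x (h x))" .
  moreover have "0 \<le> (LINT x:A|mX. F x (h x))"
    unfolding set_lebesgue_integral_def by (rule integral_nonneg_AE) (auto simp: F01 indicator_def)
  ultimately show ?thesis by (simp add: emeasure_eq_measure)
qed

lemma rc_seq:
  assumes c: "cdfish f" and ge: "\<And>n. y \<le> s n" and lim: "s \<longlonglongrightarrow> y"
  shows "(\<lambda>n. f (s n)) \<longlonglongrightarrow> f y"
proof (rule LIMSEQ_I)
  fix r :: real assume r: "0 < r"
  obtain d where d: "d > 0" "f (y + d) < f y + r" using cdfish_rc[OF c, of y "f y + r"] r by auto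
  obtain no where no: "\<forall>n\<ge>no. norm (s n - y) < d" using LIMSEQ_D[OF lim d(1)] by auto
  have "norm (f (s n) - f y) < r" if "n \<ge> no" for n
  proof -
    have "s n \<le> y + d" using no that by auto
    hence "f (s n) \<le> f (y + d)" by (rule cdfish_mono[OF c])
    moreover have "f y \<le> f (s n)" by (rule cdfish_mono[OF c ge])
    ultimately show ?thesis using d by simp
  qed
  thus "\<exists>no. \<forall>n\<ge>no. norm (f (s n) - f y) < r" by blast
qed

lemma dyadic:
  fixes z :: real
  shows "real_of_int \<lceil>z * 2^Suc n\<rceil> / 2^Suc n \<le> real_of_int \<lceil>z * 2^n\<rceil> / 2^n"
proof -
  have "\<lceil>z * 2^Suc n\<rceil> \<le> 2 * \<lceil>z * 2^n\<rceil>"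
  proof (rule ceiling_le)
    have "z * 2^n \<le> real_of_int \<lceil>z * 2^n\<rceil>" by simp
    thus "z * 2^Suc n \<le> real_of_int (2 * \<lceil>z * 2^n\<rceil>)" by simp
  qed
  hence "real_of_int \<lceil>z * 2^Suc n\<rceil> \<le> 2 * real_of_int \<lceil>z * 2^n\<rceil>" by linarith
  thus ?thesis by (simp add: field_simps)
qed

lemma L1:
  assumes hm[measurable]: "h \<in> borel_measurable borel" and A[measurable]: "A \<in> sets borel"
  shows "measure M {\<omega>\<in>space M. X \<omega> \<in> A \<and> Y \<omega> \<le> h (X \<omega>)} = (LINT x:A|mX. F x (h x))"
proof -
  define hn where "hn n x = real_of_int \<lceil>h x * 2^n\<rceil> / 2^n" for n x
  have hnm[measurable]: "hn n \<in> borel_measurable borel" for n unfolding hn_def by measurable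
  have ge: "h x \<le> hn n x" for n x
  proof -
    have "h x * 2^n \<le> real_of_int \<lceil>h x * 2^n\<rceil>" by simp
    thus ?thesis unfolding hn_def by (simp add: field_simps)
  qed
  have lt: "hn n x \<le> h x + inverse (2^n)" for n x
  proof -
    have "real_of_int \<lceil>h x * 2^n\<rceil> \<le> h x * 2^n + 1" by linarith
    thus ?thesis unfolding hn_def by (simp add: field_simps)
  qed
  have dec: "hn (Suc n) x \<le> hn n x" for n x unfolding hn_def by (rule dyadic)
  have limx: "(\<lambda>n. hn n x) \<longlonglongrightarrow> h x" for x
  proof (rule tendsto_sandwich[of "\<lambda>n. h x" _ _ "\<lambda>n. h x + inverse (2^n)"])
    show "\<forall>\<^sub>F n in sequentially. h x \<le> hn n x" using ge by simp
    show "\<forall>\<^sub>F n in sequentially. hn n x \<le> h x + inverse (2^n)" using lt by simp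
    show "(\<lambda>n. h x + inverse (2 ^ n)) \<longlonglongrightarrow> h x"
      using tendsto_add[OF tendsto_const LIMSEQ_inverse_realpow_zero[of 2]] by simp
  qed simp
  define En where "En n = {\<omega>\<in>space M. X \<omega> \<in> A \<and> Y \<omega> \<le> hn n (X \<omega>)}" for n
  have Enm: "En n \<in> sets M" for n unfolding En_def by measurable
  have decE: "decseq En"
  proof (rule decseq_SucI)
    fix n show "En (Suc n) \<subseteq> En n" unfolding En_def using dec order_trans by blast
  qed
  have capE: "(\<Inter>n. En n) = {\<omega>\<in>space M. X \<omega> \<in> A \<and> Y \<omega> \<le> h (X \<omega>)}"
  proof (intro equalityI subsetI)
    fix \<omega> assume "\<omega> \<in> (\<Inter>n. En n)"
    hence w: "\<omega> \<in> space M" "X \<omega> \<in> A" "\<And>n. Y \<omega> \<le> hn n (X \<omega>)" unfolding En_def by auto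
    have "Y \<omega> \<le> h (X \<omega>)" by (rule LIMSEQ_le_const[OF limx]) (use w in auto)
    thus "\<omega> \<in> {\<omega>\<in>space M. X \<omega> \<in> A \<and> Y \<omega> \<le> h (X \<omega>)}" using w by auto
  next
    fix \<omega> assume "\<omega> \<in> {\<omega>\<in>space M. X \<omega> \<in> A \<and> Y \<omega> \<le> h (X \<omega>)}"
    thus "\<omega> \<in> (\<Inter>n. En n)" unfolding En_def using ge order_trans by blast
  qed
  have lim1: "(\<lambda>n. measure M (En n)) \<longlonglongrightarrow> measure M {\<omega>\<in>space M. X \<omega> \<in> A \<and> Y \<omega> \<le> h (X \<omega>)}"
    unfolding capE[symmetric] by (rule finite_Lim_measure_decseq) (use Enm decE in auto)
  have eqn: "measure M (En n) = (LINT x:A|mX. F x (hn n x))" for n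
    unfolding En_def by (rule L1_countable[OF hnm A, where S="range (\<lambda>k::int. real_of_int k / 2^n)"]) (auto simp: hn_def)
  have lim2: "(\<lambda>n. LINT x:A|mX. F x (hn n x)) \<longlonglongrightarrow> (LINT x:A|mX. F x (h x))"
    unfolding set_lebesgue_integral_def
  proof (rule integral_dominated_convergence[where w="\<lambda>_. 1"])
    show "(\<lambda>x. indicat_real A x *\<^sub>R F x (h x)) \<in> borel_measurable mX"
      by (subst measurable_cong_sets[OF sets_distr refl]) measurable
    show "(\<lambda>x. indicat_real A x *\<^sub>R F x (hn i x)) \<in> borel_measurable mX" for i
      by (subst measurable_cong_sets[OF sets_distr refl]) measurable
    show "integrable mX (\<lambda>_. 1::real)" by simp
    show "AE x in mX. (\<lambda>i. indicat_real A x *\<^sub>R F x (hn i x)) \<longlonglongrightarrow> indicat_real A x *\<^sub>R F x (h x)"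
      by (intro AE_I2 tendsto_scaleR tendsto_const rc_seq[OF Fc ge limx])
    show "AE x in mX. norm (indicat_real A x *\<^sub>R F x (hn i x)) \<le> 1" for i
      by (intro AE_I2) (auto simp: indicator_def F01 abs_le_iff intro: order_trans[OF _ F01(2)] order_trans[OF F01(1)])
  qed
  show ?thesis using LIMSEQ_unique[OF lim1 lim2[folded eqn]] .
qed

end


lemma unif_Iic:
  assumes "0 \<le> s" "s \<le> 1"
  shows "measure (uniform_measure lborel {0..1::real}) {..s} = s"
proof -
  have "{..s} \<inter> {0..1} = {0..s}" using assms by auto
  hence "emeasure (uniform_measure lborel {0..1::real}) {..s} = ennreal s / 1"
    using assms by (simp add: emeasure_uniform_measure)
  thus ?thesis using assms by (simp add: measure_def divide_ennreal_def)
qed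

lemma unif_01: "measure (uniform_measure lborel {0..1::real}) {0..1} = 1"
proof -
  have "emeasure (uniform_measure lborel {0..1::real}) {0..1} = 1"
    by (simp add: emeasure_uniform_measure)
  thus ?thesis by (simp add: measure_def)
qed

lemma dir2:
  fixes M :: "'a measure" and X :: "'a \<Rightarrow> 'b::euclidean_space" and Y :: "'a \<Rightarrow> real"
    and F :: "'b \<Rightarrow> real \<Rightarrow> real" and \<alpha> :: "real \<Rightarrow> real" and \<beta> :: "real \<Rightarrow> 'b"
  assumes P: "prob_space M" and Xm[measurable]: "X \<in> borel_measurable M"
    and Ym[measurable]: "Y \<in> borel_measurable M" and cdf: "is_cond_cdf M X Y F"
    and \<alpha>c: "continuous_on {0..1} \<alpha>" and \<beta>c: "continuous_on {0..1} \<beta>"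
    and smg: "AE x in distr M borel X. strict_mono_on {0..1} (\<lambda>t. \<alpha> t + \<beta> t \<bullet> x)"
    and Um[measurable]: "U \<in> borel_measurable M"
    and YU: "AE \<omega> in M. Y \<omega> = \<alpha> (U \<omega>) + X \<omega> \<bullet> \<beta> (U \<omega>)"
    and dU: "distr M borel U = uniform_measure lborel {0..1}"
    and ind: "indep_rv M U X"
  shows "AE x in distr M borel X. \<forall>t\<in>{0..1}. cond_quantile F x t = \<alpha> t + x \<bullet> \<beta> t"
proof -
  interpret prob_space M by (rule P)
  interpret mX: prob_space "distr M borel X" by (rule mX_prob[OF P Xm Ym cdf])
  define g where "g x t = \<alpha> t + \<beta> t \<bullet> x" for x t
  have gm[measurable]: "(\<lambda>x. g x s) \<in> borel_measurable borel" for s unfolding g_def by measurable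
  have PU: "measure M {\<omega>\<in>space M. U \<omega> \<in> B} = measure (uniform_measure lborel {0..1}) B" if "B \<in> sets borel" for B
  proof -
    have "measure M {\<omega>\<in>space M. U \<omega> \<in> B} = measure (distr M borel U) B"
      using that by (subst measure_distr) (auto intro!: arg_cong[where f="measure M"])
    thus ?thesis using dU by simp
  qed
  have U01: "AE \<omega> in M. U \<omega> \<in> {0..1}"
  proof -
    have "prob {\<omega>\<in>space M. U \<omega> \<in> {0..1}} = 1" using PU[of "{0..1}"] unif_01 by simp
    from AE_prob_1[OF this] show ?thesis by auto
  qed
  have smgM: "AE \<omega> in M. strict_mono_on {0..1} (g (X \<omega>))"
    using AE_distrD[OF Xm smg] unfolding g_def .
  have key: "AE x in distr M borel X. F x (g x s) = s" if s: "0 \<le> s" "s \<le> 1" for s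
  proof (rule density_unique_real)
    have mm: "(\<lambda>x. F x (g x s)) \<in> borel_measurable (distr M borel X)"
      by (subst measurable_cong_sets[OF sets_distr refl]) (rule Fm_comp[OF P Xm Ym cdf]; measurable)
    show "integrable (distr M borel X) (\<lambda>x. F x (g x s))"
      by (rule mX.integrable_const_bound[where B=1, OF _ mm])
         (auto simp: F01[OF P Xm Ym cdf] abs_le_iff intro: order_trans[OF _ F01(2)[OF P Xm Ym cdf]] order_trans[OF F01(1)[OF P Xm Ym cdf]])
    show "integrable (distr M borel X) (\<lambda>x. s)" by simp
    fix A assume "A \<in> sets (distr M borel X)"
    hence A[measurable]: "A \<in> sets borel" by simp
    have "(LINT x:A|distr M borel X. F x (g x s)) = measure M {\<omega>\<in>space M. X \<omega> \<in> A \<and> Y \<omega> \<le> g (X \<omega>) s}"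
      by (rule L1[OF P Xm Ym cdf gm A, symmetric])
    also have "\<dots> = measure M {\<omega>\<in>space M. U \<omega> \<in> {..s} \<and> X \<omega> \<in> A}"
    proof (rule measure_eq_AE)
      show "AE \<omega> in M. (\<omega> \<in> {\<omega>\<in>space M. X \<omega> \<in> A \<and> Y \<omega> \<le> g (X \<omega>) s}) \<longleftrightarrow> (\<omega> \<in> {\<omega>\<in>space M. U \<omega> \<in> {..s} \<and> X \<omega> \<in> A})"
        using YU U01 smgM
      proof eventually_elim
        case (elim \<omega>)
        have "Y \<omega> = g (X \<omega>) (U \<omega>)" using elim(1) by (simp add: g_def inner_commute)
        moreover have "g (X \<omega>) (U \<omega>) \<le> g (X \<omega>) s \<longleftrightarrow> U \<omega> \<le> s"
          by (rule strict_mono_on_less_eq[OF elim(3)]) (use elim(2) s in auto)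
        ultimately show ?case by auto
      qed
    qed measurable
    also have "\<dots> = measure M {\<omega>\<in>space M. U \<omega> \<in> {..s}} * measure M {\<omega>\<in>space M. X \<omega> \<in> A}"
      using ind[unfolded indep_rv_def, rule_format, OF _ A, of "{..s}"] by simp
    also have "\<dots> = s * measure (distr M borel X) A"
      using PU[of "{..s}"] unif_Iic[OF s] by (simp add: measure_distr vimage_def Int_def conj_commute)
    also have "\<dots> = (LINT x:A|distr M borel X. s)"
      by (simp add: set_integral_const)
    finally show "(LINT x:A|distr M borel X. F x (g x s)) = (LINT x:A|distr M borel X. s)" .
  qed
  have "AE x in distr M borel X. \<forall>s\<in>\<rat> \<inter> {0..1}. F x (g x s) = s"
    by (rule AE_ball_countable') (auto intro: key countable_Int1 countable_rat)
  with smg show ?thesis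
  proof eventually_elim
    case (elim x)
    have c: "cdfish (F x)" by (rule Fc[OF P Xm Ym cdf])
    have sm: "strict_mono_on {0..1} (g x)" using elim(1) unfolding g_def .
    have gc: "continuous_on {0..1} (g x)" unfolding g_def
      by (intro continuous_on_add \<alpha>c continuous_on_inner \<beta>c continuous_on_const)
    have rat: "\<And>s. s \<in> \<rat> \<Longrightarrow> s \<in> {0..1} \<Longrightarrow> F x (g x s) = s" using elim(2) by auto
    have fg: "F x (g x s) = s" if s: "s \<in> {0..1}" for s
    proof -
      have up: "F x (g x s) \<le> s"
      proof (cases "s = 1")
        case True thus ?thesis using rat[of 1] by simp
      next
        case False
        show ?thesis
        proof (rule ccontr)
          assume "\<not> F x (g x s) \<le> s"
          hence lt: "s < min (F x (g x s)) 1" using s False by auto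
          obtain r where r: "r \<in> \<rat>" "s < r" "r < min (F x (g x s)) 1" using Rats_dense_in_real[OF lt] by auto
          have "F x (g x s) \<le> F x (g x r)"
            using cdfish_mono[OF c] strict_mono_on_leD[OF sm, of s r] r s by auto
          thus False using rat[of r] r s by auto
        qed
      qed
      have lo: "s \<le> F x (g x s)"
      proof (rule ccontr)
        assume "\<not> s \<le> F x (g x s)"
        hence lt: "max (F x (g x s)) 0 < s" using s cdfish_ge0[OF c] by auto
        obtain r where r: "r \<in> \<rat>" "max (F x (g x s)) 0 < r" "r < s" using Rats_dense_in_real[OF lt] by auto
        have "F x (g x r) \<le> F x (g x s)"
          using cdfish_mono[OF c] strict_mono_on_leD[OF sm, of r s] r s by auto
        thus False using rat[of r] r s by auto
      qed
      show ?thesis using up lo by simp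
    qed
    show ?case
    proof
      fix t :: real assume t: "t \<in> {0..1}"
      have "cond_quantile F x t = g x t" by (rule Q_from_F[where F=F and x=x, OF c gc sm fg t]) 
      thus "cond_quantile F x t = \<alpha> t + x \<bullet> \<beta> t" by (simp add: g_def inner_commute)
    qed
  qed
qed



lemma unif_Ioi:
  "emeasure (uniform_measure lborel {0..1::real}) {s<..} = ennreal (1 - max 0 (min s 1))"
proof -
  have e: "emeasure (uniform_measure lborel {0..1::real}) {s<..} = emeasure lborel ({s<..} \<inter> {0..1::real})"
    by (simp add: emeasure_uniform_measure divide_ennreal_def Int_commute)
  consider "s < 0" | "0 \<le> s" "s < 1" | "1 \<le> s" by linarith
  thus ?thesis
  proof cases
    case 1
    hence "{s<..} \<inter> {0..1::real} = {0..1}" by auto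
    thus ?thesis using e 1 by simp
  next
    case 2
    hence "{s<..} \<inter> {0..1::real} = {s<..1}" by auto
    thus ?thesis using e 2 by simp
  next
    case 3
    hence "{s<..} \<inter> {0..1::real} = {}" by auto
    thus ?thesis using e 3 by simp
  qed
qed

lemma dir1:
  fixes M :: "'a measure" and X :: "'a \<Rightarrow> 'b::euclidean_space" and Y :: "'a \<Rightarrow> real"
    and F :: "'b \<Rightarrow> real \<Rightarrow> real" and \<alpha> :: "real \<Rightarrow> real" and \<beta> :: "real \<Rightarrow> 'b"
  assumes P: "prob_space M" and Xm[measurable]: "X \<in> borel_measurable M"
    and Ym[measurable]: "Y \<in> borel_measurable M" and cdf: "is_cond_cdf M X Y F"
    and hq: "AE x in distr M borel X.
           continuous_on {0..1} (cond_quantile F x) \<and> strict_mono_on {0..1} (cond_quantile F x)"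
    and H: "AE x in distr M borel X. \<forall>t\<in>{0..1}. cond_quantile F x t = \<alpha> t + x \<bullet> \<beta> t"
  shows "\<exists>U. U \<in> borel_measurable M \<and>
              (AE \<omega> in M. Y \<omega> = \<alpha> (U \<omega>) + X \<omega> \<bullet> \<beta> (U \<omega>)) \<and>
              distr M borel U = uniform_measure lborel {0..1} \<and>
              indep_rv M U X"
proof -
  interpret prob_space M by (rule P)
  interpret mX: prob_space "distr M borel X" by (rule mX_prob[OF P Xm Ym cdf])
  define g where "g x t = \<alpha> t + \<beta> t \<bullet> x" for x t
  have gm[measurable]: "(\<lambda>x. g x s) \<in> borel_measurable borel" for s unfolding g_def by measurable
  define good where "good x \<longleftrightarrow> continuous_on {0..1} (cond_quantile F x) \<and> strict_mono_on {0..1} (cond_quantile F x)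
      \<and> (\<forall>t\<in>{0..1}. cond_quantile F x t = g x t)" for x
  have goodAE: "AE x in distr M borel X. good x"
    using hq H by eventually_elim (auto simp: good_def g_def inner_commute)
  have goodM: "AE \<omega> in M. good (X \<omega>)" using AE_distrD[OF Xm goodAE] .
  have c: "cdfish (F x)" for x by (rule Fc[OF P Xm Ym cdf])
  have Fg: "F x (g x s) = s" if "good x" "s \<in> {0..1}" for x s
    using Q_at[where F=F and x=x, OF c] that unfolding good_def by (metis atLeastAtMost_iff)
  have smg: "strict_mono_on {0..1} (g x)" if "good x" for x
  proof -
    have "strict_mono_on {0..1} (cond_quantile F x)" using that by (simp add: good_def)
    thus ?thesis using that unfolding good_def strict_mono_on_def by auto
  qed
  define U where "U \<omega> = F (X \<omega>) (Y \<omega>)" for \<omega>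
  have Um[measurable]: "U \<in> borel_measurable M" unfolding U_def by (rule Fm_comp[OF P Xm Ym cdf Xm Ym])
  have U01: "U \<omega> \<in> {0..1}" for \<omega> using F01[OF P Xm Ym cdf] unfolding U_def by auto
  have mXA: "measure (distr M borel X) A = prob {\<omega>\<in>space M. X \<omega> \<in> A}" if "A \<in> sets borel" for A
    using that by (subst measure_distr) (auto intro!: arg_cong[where f=prob])
  have Lg: "prob {\<omega>\<in>space M. X \<omega> \<in> A \<and> Y \<omega> \<le> g (X \<omega>) s} = s * measure (distr M borel X) A"
    if A[measurable]: "A \<in> sets borel" and s: "s \<in> {0..1}" for A s
  proof -
    have "prob {\<omega>\<in>space M. X \<omega> \<in> A \<and> Y \<omega> \<le> g (X \<omega>) s} = (LINT x:A|distr M borel X. F x (g x s))"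
      by (rule L1[OF P Xm Ym cdf gm A])
    also have "\<dots> = (LINT x:A|distr M borel X. s)"
      unfolding set_lebesgue_integral_def
    proof (rule integral_cong_AE)
      show "(\<lambda>x. indicat_real A x *\<^sub>R F x (g x s)) \<in> borel_measurable (distr M borel X)"
      proof -
        have [measurable]: "(\<lambda>x. F x (g x s)) \<in> borel_measurable borel"
          by (rule Fm_comp[OF P Xm Ym cdf]) measurable
        show ?thesis by (subst measurable_cong_sets[OF sets_distr refl]) measurable
      qed
      show "(\<lambda>x. indicat_real A x *\<^sub>R s) \<in> borel_measurable (distr M borel X)"
        by (subst measurable_cong_sets[OF sets_distr refl]) measurable
      show "AE x in distr M borel X. indicat_real A x *\<^sub>R F x (g x s) = indicat_real A x *\<^sub>R s"
        using goodAE by eventually_elim (simp add: Fg[OF _ s])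
    qed
    also have "\<dots> = s * measure (distr M borel X) A" by (simp add: set_integral_const)
    finally show ?thesis .
  qed
  have lowAE: "AE \<omega> in M. g (X \<omega>) 0 < Y \<omega>"
  proof -
    have "emeasure M {\<omega>\<in>space M. X \<omega> \<in> UNIV \<and> Y \<omega> \<le> g (X \<omega>) 0} = 0"
      using Lg[of UNIV 0] by (simp add: emeasure_eq_measure)
    thus ?thesis by (subst AE_iff_measurable[where N="{\<omega>\<in>space M. X \<omega> \<in> UNIV \<and> Y \<omega> \<le> g (X \<omega>) 0}"]) (auto simp: not_less)
  qed
  have upAE: "AE \<omega> in M. Y \<omega> \<le> g (X \<omega>) 1"
  proof -
    have "prob {\<omega>\<in>space M. X \<omega> \<in> UNIV \<and> Y \<omega> \<le> g (X \<omega>) 1} = 1"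
      using Lg[of UNIV 1] mX.prob_space by simp
    from AE_prob_1[OF this] show ?thesis by auto
  qed
  have YU: "AE \<omega> in M. Y \<omega> = g (X \<omega>) (U \<omega>)"
    using goodM lowAE upAE
  proof eventually_elim
    case (elim \<omega>)
    have "cond_quantile F (X \<omega>) 0 \<le> Y \<omega>" "Y \<omega> \<le> cond_quantile F (X \<omega>) 1"
      using elim unfolding good_def by auto
    from Q_inv[where F=F and x="X \<omega>", OF c _ this] elim(1)
    have "cond_quantile F (X \<omega>) (U \<omega>) = Y \<omega>" unfolding good_def U_def by simp
    thus ?case using elim(1) U01[of \<omega>] unfolding good_def by auto
  qed
  have LU: "prob {\<omega>\<in>space M. U \<omega> \<le> s \<and> X \<omega> \<in> A} = s * measure (distr M borel X) A"
    if A[measurable]: "A \<in> sets borel" and s: "s \<in> {0..1}" for A s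
  proof -
    have "prob {\<omega>\<in>space M. U \<omega> \<le> s \<and> X \<omega> \<in> A} = prob {\<omega>\<in>space M. X \<omega> \<in> A \<and> Y \<omega> \<le> g (X \<omega>) s}"
    proof (rule measure_eq_AE)
      show "AE \<omega> in M. (\<omega> \<in> {\<omega>\<in>space M. U \<omega> \<le> s \<and> X \<omega> \<in> A}) \<longleftrightarrow> (\<omega> \<in> {\<omega>\<in>space M. X \<omega> \<in> A \<and> Y \<omega> \<le> g (X \<omega>) s})"
        using YU goodM
      proof eventually_elim
        case (elim \<omega>)
        have "g (X \<omega>) (U \<omega>) \<le> g (X \<omega>) s \<longleftrightarrow> U \<omega> \<le> s"
          by (rule strict_mono_on_less_eq[OF smg[OF elim(2)]]) (use U01 s in auto)
        thus ?case using elim(1) by auto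
      qed
    qed measurable
    thus ?thesis using Lg[OF A s] by simp
  qed
  define cl where "cl s = max 0 (min s (1::real))" for s
  have LU': "prob {\<omega>\<in>space M. U \<omega> \<le> s \<and> X \<omega> \<in> A} = cl s * measure (distr M borel X) A"
    if A[measurable]: "A \<in> sets borel" for A s
  proof -
    consider "s < 0" | "0 \<le> s" "s \<le> 1" | "1 < s" by linarith
    thus ?thesis
    proof cases
      case 1
      hence e: "{\<omega>\<in>space M. U \<omega> \<le> s \<and> X \<omega> \<in> A} = {}" using U01 by (auto simp: not_le intro: less_le_trans)
      show ?thesis using 1 by (simp only: e) (simp add: cl_def)
    next
      case 2 thus ?thesis using LU[OF A, of s] by (simp add: cl_def)
    next
      case 3
      hence e: "{\<omega>\<in>space M. U \<omega> \<le> s \<and> X \<omega> \<in> A} = {\<omega>\<in>space M. X \<omega> \<in> A}"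
        using U01 3 by (auto, metis atLeastAtMost_iff less_imp_le order_trans)
      show ?thesis using 3 mXA[OF A] by (simp only: e) (simp add: cl_def)
    qed
  qed
  have joint: "prob {\<omega>\<in>space M. U \<omega> \<in> B \<and> X \<omega> \<in> A} = measure (uniform_measure lborel {0..1}) B * measure (distr M borel X) A"
    if A[measurable]: "A \<in> sets borel" and B[measurable]: "B \<in> sets borel" for A B
  proof -
    define EA where "EA = {\<omega>\<in>space M. X \<omega> \<in> A}"
    have EA[measurable]: "EA \<in> sets M" unfolding EA_def by measurable
    define N1 where "N1 = distr (density M (indicator EA)) borel U"
    define N2 where "N2 = scale_measure (ennreal (measure (distr M borel X) A)) (uniform_measure lborel {0..1::real})"
    have N1e: "emeasure N1 C = emeasure M {\<omega>\<in>space M. U \<omega> \<in> C \<and> X \<omega> \<in> A}" if C[measurable]: "C \<in> sets borel" for C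
    proof -
      have "emeasure N1 C = emeasure (density M (indicator EA)) (U -` C \<inter> space M)"
        unfolding N1_def by (subst emeasure_distr) auto
      also have "\<dots> = (\<integral>\<^sup>+ x. indicator EA x * indicator (U -` C \<inter> space M) x \<partial>M)"
        by (rule emeasure_density) measurable
      also have "\<dots> = (\<integral>\<^sup>+ x. indicator {\<omega>\<in>space M. U \<omega> \<in> C \<and> X \<omega> \<in> A} x \<partial>M)"
        by (intro nn_integral_cong) (auto simp: indicator_def EA_def)
      also have "\<dots> = emeasure M {\<omega>\<in>space M. U \<omega> \<in> C \<and> X \<omega> \<in> A}"
        by (rule nn_integral_indicator) measurable
      finally show ?thesis .
    qed
    have "N1 = N2"
    proof (rule measure_eqI_lessThan)
      show "sets N1 = sets borel" unfolding N1_def by simp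
      show "sets N2 = sets borel" unfolding N2_def by simp
      fix s
      show "emeasure N1 {s<..} < \<infinity>" using N1e[of "{s<..}"] by (simp add: less_top[symmetric])
      have "{\<omega>\<in>space M. U \<omega> \<in> {s<..} \<and> X \<omega> \<in> A} = {\<omega>\<in>space M. X \<omega> \<in> A} - {\<omega>\<in>space M. U \<omega> \<le> s \<and> X \<omega> \<in> A}"
        by auto
      hence "prob {\<omega>\<in>space M. U \<omega> \<in> {s<..} \<and> X \<omega> \<in> A} = prob {\<omega>\<in>space M. X \<omega> \<in> A} - prob {\<omega>\<in>space M. U \<omega> \<le> s \<and> X \<omega> \<in> A}"
        by (simp add: finite_measure_Diff subset_iff)
      also have "\<dots> = measure (distr M borel X) A * (1 - cl s)"
        using LU'[OF A, of s] mXA[OF A] by (simp add: algebra_simps)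
      finally have pr: "prob {\<omega>\<in>space M. U \<omega> \<in> {s<..} \<and> X \<omega> \<in> A} = measure (distr M borel X) A * (1 - cl s)" .
      have "emeasure N1 {s<..} = ennreal (measure (distr M borel X) A * (1 - cl s))"
        using N1e[of "{s<..}"] pr by (simp add: emeasure_eq_measure)
      also have "\<dots> = emeasure N2 {s<..}"
        unfolding N2_def using unif_Ioi[of s]
        by (simp add: cl_def ennreal_mult[symmetric])
      finally show "emeasure N1 {s<..} = emeasure N2 {s<..}" .
    qed
    hence "emeasure M {\<omega>\<in>space M. U \<omega> \<in> B \<and> X \<omega> \<in> A} = emeasure N2 B" using N1e[OF B] by simp
    also have "\<dots> = ennreal (measure (distr M borel X) A) * emeasure (uniform_measure lborel {0..1::real}) B"
      unfolding N2_def by simp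
    also have "\<dots> = ennreal (measure (distr M borel X) A * measure (uniform_measure lborel {0..1::real}) B)"
    proof -
      interpret UU: prob_space "uniform_measure lborel {0..1::real}"
        by (rule prob_space_uniform_measure) auto
      show ?thesis by (simp add: UU.emeasure_eq_measure ennreal_mult)
    qed
    finally show ?thesis by (simp add: emeasure_eq_measure mult.commute)
  qed
  have distrU: "distr M borel U = uniform_measure lborel {0..1}"
  proof (rule measure_eqI)
    show "sets (distr M borel U) = sets (uniform_measure lborel {0..1})" by simp
    fix B assume "B \<in> sets (distr M borel U)"
    hence B[measurable]: "B \<in> sets borel" by simp
    interpret UU: prob_space "uniform_measure lborel {0..1::real}"
      by (rule prob_space_uniform_measure) auto
    have "emeasure (distr M borel U) B = emeasure M {\<omega>\<in>space M. U \<omega> \<in> B \<and> X \<omega> \<in> UNIV}"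
      by (subst emeasure_distr) (auto intro!: arg_cong[where f="emeasure M"])
    also have "\<dots> = ennreal (measure (uniform_measure lborel {0..1}) B)"
      using joint[of UNIV B] mX.prob_space by (simp add: emeasure_eq_measure)
    also have "\<dots> = emeasure (uniform_measure lborel {0..1}) B" by (simp add: UU.emeasure_eq_measure)
    finally show "emeasure (distr M borel U) B = emeasure (uniform_measure lborel {0..1}) B" .
  qed
  have indep: "indep_rv M U X"
    unfolding indep_rv_def
  proof (intro ballI)
    fix B :: "real set" and A :: "'b set" assume B[measurable]: "B \<in> sets borel" and A[measurable]: "A \<in> sets borel"
    have pb: "prob {\<omega>\<in>space M. U \<omega> \<in> B} = measure (uniform_measure lborel {0..1}) B"
      using joint[of UNIV B] mX.prob_space by simp
    show "prob {\<omega>\<in>space M. U \<omega> \<in> B \<and> X \<omega> \<in> A} = prob {\<omega>\<in>space M. U \<omega> \<in> B} * prob {\<omega>\<in>space M. X \<omega> \<in> A}"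
      using joint[OF A B] pb mXA[OF A] by simp
  qed
  show ?thesis
  proof (intro exI conjI)
    show "U \<in> borel_measurable M" by (rule Um)
    show "AE \<omega> in M. Y \<omega> = \<alpha> (U \<omega>) + X \<omega> \<bullet> \<beta> (U \<omega>)"
      using YU by eventually_elim (simp add: g_def inner_commute)
  qed (fact distrU, fact indep)
qed


theorem mainTheorem6:
  fixes M :: "'a measure"
    and X :: "'a \<Rightarrow> real ^ 'n"
    and Y :: "'a \<Rightarrow> real"
    and F :: "real ^ 'n \<Rightarrow> real \<Rightarrow> real"
    and \<alpha> :: "real \<Rightarrow> real"
    and \<beta> :: "real \<Rightarrow> real ^ 'n"
  assumes "prob_space M"
    and "nonatomic M"
    and "X \<in> borel_measurable M"
    and "bounded (X ` space M)"
    and "integral\<^sup>L M X = 0"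
    and "Y \<in> borel_measurable M"
    and "bounded (Y ` space M)"
    and "is_cond_cdf M X Y F"
    and "AE x in distr M borel X.
           continuous_on {0..1} (cond_quantile F x) \<and> strict_mono_on {0..1} (cond_quantile F x)"
    and "\<And>a b. measure M {\<omega>\<in>space M. Y \<omega> = a + b \<bullet> X \<omega>} = 0"
    and "continuous_on {0..1} \<alpha>"
    and "continuous_on {0..1} \<beta>"
    and "AE x in distr M borel X. strict_mono_on {0..1} (\<lambda>t. \<alpha> t + \<beta> t \<bullet> x)"
  shows "(AE x in distr M borel X. \<forall>t\<in>{0..1}. cond_quantile F x t = \<alpha> t + x \<bullet> \<beta> t)
     \<longleftrightarrow> (\<exists>U. U \<in> borel_measurable M \<and>
              (AE \<omega> in M. Y \<omega> = \<alpha> (U \<omega>) + X \<omega> \<bullet> \<beta> (U \<omega>)) \<and>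
              distr M borel U = uniform_measure lborel {0..1} \<and>
              indep_rv M U X)"
proof
  assume H: "AE x in distr M borel X. \<forall>t\<in>{0..1}. cond_quantile F x t = \<alpha> t + x \<bullet> \<beta> t"
  show "\<exists>U. U \<in> borel_measurable M \<and>
              (AE \<omega> in M. Y \<omega> = \<alpha> (U \<omega>) + X \<omega> \<bullet> \<beta> (U \<omega>)) \<and>
              distr M borel U = uniform_measure lborel {0..1} \<and>
              indep_rv M U X"
    by (rule dir1[OF assms(1,3,6,8,9) H])
next
  assume "\<exists>U. U \<in> borel_measurable M \<and>
              (AE \<omega> in M. Y \<omega> = \<alpha> (U \<omega>) + X \<omega> \<bullet> \<beta> (U \<omega>)) \<and>
              distr M borel U = uniform_measure lborel {0..1} \<and>
              indep_rv M U X"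
  then obtain U where U: "U \<in> borel_measurable M"
    "AE \<omega> in M. Y \<omega> = \<alpha> (U \<omega>) + X \<omega> \<bullet> \<beta> (U \<omega>)"
    "distr M borel U = uniform_measure lborel {0..1}" "indep_rv M U X" by blast
  show "AE x in distr M borel X. \<forall>t\<in>{0..1}. cond_quantile F x t = \<alpha> t + x \<bullet> \<beta> t"
    by (rule dir2[OF assms(1,3,6,8,11,12,13) U])
qed

end
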